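(* The Shapley cost sharing mechanism is REP-expanded.
   Context: GND instance: finite resource set $E$; players $i \in [N]$ with strategy collections $P_i \subseteq 2^E$ and weight vectors $w_i \in \mathbb{Z}_{\geq 1}^E$; constants $q\in\mathbb{Z}_{\ge1}$, $\alpha_1,\dots,\alpha_q > 1$; for each $e$, $\sigma_e \geq 0$, $\xi_{e,j} \geq 0$ (at least one positive), and $F_e(0)=0$, $F_e(l)=\sigma_e+\sum_j \xi_{e,j} l^{\alpha_j}$ for $l>0$. Profile $p=(p_1,\dots,p_N)$, $p_i\in P_i$; load $l_e^p=\sum_{i: e\in p_i} w_i(e)$; $S_e=\{i: e\in p_i\}$. Shapley cost sharing: for $e\in p_i$, $f_{i,e}(p)=\mathbb{E}\big[F_e\big(\sum_{i'\in S_e^i(\pi_e)}w_{i'}(e)+w_i(e)\big)-F_e\big(\sum_{i'\in S_e^i(\pi_e)}w_{i'}(e)\big)\big]$, where $\pi_e$ is a uniformly random permutation of $S_e$ and $S_e^i(\pi_e)$ is the set of players preceding $i$ in $\pi_e$; $f_{i,e}(p)=0$ if $e\notin p_i$. A cost sharing mechanism $M=\{f_{i,e}\}$ is REP-expanded if for each $j\in[q]$ there are a nonnegative integer $K_j$ and nonnegative constants $x_{k,j}\in[0,\alpha_j-1]$, $y_{k,j}\in[1,\alpha_j]$, $z_{k,j}$ ($k\in[K_j]$), depending only on $\alpha_j$, with $x_{k,j}+y_{k,j}=\alpha_j$, such that for every profile $p$, player $i$ and resource $e\in p_i$: $$f_{i,e}(p)\le \sigma_e+\sum_{j\in[q]}\xi_{e,j}\sum_{k=1}^{K_j}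 z_{k,j}\,(l_e^p-w_i(e))^{x_{k,j}}(w_i(e))^{y_{k,j}}.$$ *)

theory Defs
  imports Complex_Main "HOL-Combinatorics.Multiset_Permutations"
begin

(* Real power with the convention 0^0 = 1 (used for (l - w)^x (w)^y in the REP bound,
   where the bases are nonnegative). Isabelle's powr has 0 powr 0 = 0, hence this wrapper. *)
definition rpow :: "real \<Rightarrow> real \<Rightarrow> real" where
  "rpow b a = (if b = 0 then (if a = 0 then 1 else 0) else b powr a)"

definition gnd_cost :: "nat \<Rightarrow> (nat \<Rightarrow> real) \<Rightarrow> real \<Rightarrow> (nat \<Rightarrow> real) \<Rightarrow> real \<Rightarrow> real" where
  "gnd_cost q \<alpha> \<sigma>e \<xi>e l = (if l = 0 then 0 else \<sigma>e + (\<Sum>j=1..q. \<xi>e j * l powr \<alpha> j))"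

definition pred_weight :: "(nat \<Rightarrow> real) \<Rightarrow> nat list \<Rightarrow> nat \<Rightarrow> real" where
  "pred_weight wt \<pi> i = sum_list (map wt (takeWhile (\<lambda>x. x \<noteq> i) \<pi>))"

definition shapley_share :: "(real \<Rightarrow> real) \<Rightarrow> nat set \<Rightarrow> (nat \<Rightarrow> real) \<Rightarrow> nat \<Rightarrow> real" where
  "shapley_share F S wt i =
     (if i \<in> S then
        (\<Sum>\<pi>\<in>permutations_of_set S. F (pred_weight wt \<pi> i + wt i) - F (pred_weight wt \<pi> i))
          / real (card (permutations_of_set S))
      else 0)"

definition users :: "nat \<Rightarrow> (nat \<Rightarrow> nat set) \<Rightarrow> nat \<Rightarrow> nat set" where
  "users N p e = {i \<in> {1..N}. e \<in> p i}"

definition load :: "nat \<Rightarrow> (nat \<Rightarrow> nat set) \<Rightarrow> (nat \<Rightarrow> nat \<Rightarrow> nat) \<Rightarrow> nat \<Rightarrow> real" where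
  "load N p w e = (\<Sum>i\<in>users N p e. real (w i e))"

definition shapley_cost :: "nat \<Rightarrow> (nat \<Rightarrow> real) \<Rightarrow> (nat \<Rightarrow> real) \<Rightarrow> (nat \<Rightarrow> nat \<Rightarrow> real)
    \<Rightarrow> nat \<Rightarrow> (nat \<Rightarrow> nat \<Rightarrow> nat) \<Rightarrow> (nat \<Rightarrow> nat set) \<Rightarrow> nat \<Rightarrow> nat \<Rightarrow> real" where
  "shapley_cost q \<alpha> \<sigma> \<xi> N w p i e =
     shapley_share (gnd_cost q \<alpha> (\<sigma> e) (\<xi> e)) (users N p e) (\<lambda>i'. real (w i' e)) i"

definition gnd_instance :: "nat set \<Rightarrow> nat \<Rightarrow> (nat \<Rightarrow> nat set set) \<Rightarrow> (nat \<Rightarrow> nat \<Rightarrow> nat)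
    \<Rightarrow> nat \<Rightarrow> (nat \<Rightarrow> real) \<Rightarrow> (nat \<Rightarrow> real) \<Rightarrow> (nat \<Rightarrow> nat \<Rightarrow> real) \<Rightarrow> bool" where
  "gnd_instance E N P w q \<alpha> \<sigma> \<xi> \<longleftrightarrow>
     finite E \<and> (\<forall>i\<in>{1..N}. P i \<subseteq> Pow E) \<and>
     (\<forall>i\<in>{1..N}. \<forall>e\<in>E. w i e \<ge> 1) \<and>
     q \<ge> 1 \<and> (\<forall>j\<in>{1..q}. \<alpha> j > 1) \<and>
     (\<forall>e\<in>E. \<sigma> e \<ge> 0 \<and> (\<forall>j\<in>{1..q}. \<xi> e j \<ge> 0) \<and> (\<exists>j\<in>{1..q}. \<xi> e j > 0))"

definition is_profile :: "nat \<Rightarrow> (nat \<Rightarrow> nat set set) \<Rightarrow> (nat \<Rightarrow> nat set) \<Rightarrow> bool" where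
  "is_profile N P p \<longleftrightarrow> (\<forall>i\<in>{1..N}. p i \<in> P i)"

end

theory Submission imports Defs begin

lemma two_pow_bound:
  fixes x w c :: real
  assumes "0 \<le> x" "0 < w" "0 \<le> c"
  shows "(x + w) powr c \<le> 2 powr c * (x powr c + w powr c)"
proof -
  define m where "m = max x w"
  have m0: "0 < m" using assms by (simp add: m_def)
  have "(x + w) powr c \<le> (2 * m) powr c"
    by (rule powr_mono2) (use assms in \<open>auto simp: m_def\<close>)
  also have "\<dots> = 2 powr c * m powr c" by (simp add: powr_mult m0)
  also have "m powr c \<le> x powr c + w powr c"
    by (cases "x \<le> w") (auto simp: m_def max_def)
  hence "2 powr c * m powr c \<le> 2 powr c * (x powr c + w powr c)" by simp
  finally show ?thesis .
qed

lemma key: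
  fixes a A x w :: real
  assumes a: "a > 1" and A: "0 \<le> A" "A \<le> x" and w: "0 < w"
  shows "(A + w) powr a - A powr a \<le> a * 2 powr (a - 1) * (x powr (a - 1) * w + w powr a)"
proof -
  have "(A + w) powr a - A powr a \<le> a * w * (A + w) powr (a - 1)"
  proof (cases "A = 0")
    case True
    have "w powr a = w * w powr (a - 1)"
      using w by (simp add: powr_diff field_simps) 
    moreover have "w * w powr (a-1) \<le> a * (w * w powr (a-1))"
    proof -
        have "0 \<le> w * w powr (a-1)" using w by simp
        thus ?thesis using a by (simp add: mult_le_cancel_right1)
      qed
    ultimately show ?thesis using True by simp
  next
    case False
    hence Ap: "A > 0" using A by simp
    have "\<exists>z>A. z < A + w \<and> (A + w) powr a - A powr a = (A + w - A) * (a * z powr (a - 1))"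
      by (rule MVT2) (use w Ap in \<open>auto intro!: has_real_derivative_powr\<close>)
    then obtain z where z: "z > A" "z < A + w" "(A + w) powr a - A powr a = w * (a * z powr (a - 1))"
      by auto
    have "z powr (a - 1) \<le> (A + w) powr (a - 1)"
      by (rule powr_mono2) (use z a Ap in auto)
    thus ?thesis using z(3) a w by (simp add: mult_left_mono)
  qed
  also have "(A + w) powr (a - 1) \<le> (x + w) powr (a - 1)"
    by (rule powr_mono2) (use A a w in auto)
  also have "\<dots> \<le> 2 powr (a - 1) * (x powr (a - 1) + w powr (a - 1))"
    by (rule two_pow_bound) (use A a w in auto)
  also have "w * (x powr (a - 1) + w powr (a - 1)) = x powr (a - 1) * w + w powr a"
    using w by (simp add: powr_diff field_simps)
  ultimately show ?thesis using a w
    by (smt (verit) mult.assoc mult.left_commute mult_left_mono)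
qed
lemma cost_step:
  assumes s: "0 \<le> \<sigma>e" and j: "\<forall>j\<in>{1..q}. 0 \<le> \<xi>e j \<and> 1 < \<alpha> j"
    and A: "0 \<le> A" "A \<le> x" and w: "0 < w"
  shows "gnd_cost q \<alpha> \<sigma>e \<xi>e (A + w) - gnd_cost q \<alpha> \<sigma>e \<xi>e A \<le>
     \<sigma>e + (\<Sum>j=1..q. \<xi>e j * (\<alpha> j * 2 powr (\<alpha> j - 1) * (x powr (\<alpha> j - 1) * w + w powr \<alpha> j)))"
proof -
  have "gnd_cost q \<alpha> \<sigma>e \<xi>e (A + w) - gnd_cost q \<alpha> \<sigma>e \<xi>e A \<le>
     \<sigma>e + (\<Sum>j=1..q. \<xi>e j * ((A + w) powr \<alpha> j - A powr \<alpha> j))"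
  proof (cases "A = 0")
    case True
    then show ?thesis using w by (simp add: gnd_cost_def)
  next
    case False
    then show ?thesis using w A s
      by (simp add: gnd_cost_def sum_subtractf[symmetric] right_diff_distrib)
  qed
  also have "\<dots> \<le> \<sigma>e + (\<Sum>j=1..q. \<xi>e j * (\<alpha> j * 2 powr (\<alpha> j - 1) * (x powr (\<alpha> j - 1) * w + w powr \<alpha> j)))"
    apply (rule add_left_mono, rule sum_mono, rule mult_left_mono)
    using j key A w by auto
  finally show ?thesis .
qed

lemma pred_weight_bounds:
  assumes "\<pi> \<in> permutations_of_set S" "finite S" "i \<in> S" "\<forall>k\<in>S. wt k \<ge> 0"
  shows "0 \<le> pred_weight wt \<pi> i" "pred_weight wt \<pi> i \<le> (\<Sum>k\<in>S. wt k) - wt i"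
proof -
  have d: "distinct \<pi>" "set \<pi> = S" using assms(1) by (auto dest: permutations_of_setD)
  let ?T = "set (takeWhile (\<lambda>x. x \<noteq> i) \<pi>)"
  have eq: "pred_weight wt \<pi> i = sum wt ?T"
    unfolding pred_weight_def using d by (simp add: sum_list_distinct_conv_sum_set)
  have sub: "?T \<subseteq> S - {i}" using d
    by (auto dest: set_takeWhileD)
  show "0 \<le> pred_weight wt \<pi> i" unfolding eq using sub assms(4)
    by (intro sum_nonneg) auto
  have "sum wt ?T \<le> sum wt (S - {i})"
    by (rule sum_mono2) (use sub assms in auto)
  also have "\<dots> = (\<Sum>k\<in>S. wt k) - wt i" using assms by (simp add: sum_diff1)
  finally show "pred_weight wt \<pi> i \<le> (\<Sum>k\<in>S. wt k) - wt i" unfolding eq .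
qed

lemma share_bound:
  assumes "finite S" "i \<in> S" "\<And>\<pi>. \<pi> \<in> permutations_of_set S \<Longrightarrow> F (pred_weight wt \<pi> i + wt i) - F (pred_weight wt \<pi> i) \<le> B"
  shows "shapley_share F S wt i \<le> B"
proof -
  let ?P = "permutations_of_set S"
  have c: "real (card ?P) > 0" using assms(1) by simp
  have "(\<Sum>\<pi>\<in>?P. F (pred_weight wt \<pi> i + wt i) - F (pred_weight wt \<pi> i)) \<le> real (card ?P) * B"
    using sum_bounded_above[of ?P _ B] assms(3) by simp
  thus ?thesis using assms c unfolding shapley_share_def by (simp add: divide_le_eq mult.commute)
qed

theorem lemma6p3:
  "\<exists>(K :: real \<Rightarrow> nat) (X :: real \<Rightarrow> nat \<Rightarrow> real) (Y :: real \<Rightarrow> nat \<Rightarrow> real) (Z :: real \<Rightarrow> nat \<Rightarrow> real).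
     (\<forall>a. a > 1 \<longrightarrow> (\<forall>k\<in>{1..K a}.
          0 \<le> X a k \<and> X a k \<le> a - 1 \<and> 1 \<le> Y a k \<and> Y a k \<le> a \<and>
          X a k + Y a k = a \<and> 0 \<le> Z a k)) \<and>
     (\<forall>E N P w q \<alpha> \<sigma> \<xi> p i e.
        gnd_instance E N P w q \<alpha> \<sigma> \<xi> \<longrightarrow> is_profile N P p \<longrightarrow>
        i \<in> {1..N} \<longrightarrow> e \<in> p i \<longrightarrow>
        shapley_cost q \<alpha> \<sigma> \<xi> N w p i e
          \<le> \<sigma> e + (\<Sum>j=1..q. \<xi> e j * (\<Sum>k=1..K (\<alpha> j).
                 Z (\<alpha> j) k * rpow (load N p w e - real (w i e)) (X (\<alpha> j) k)
                             * rpow (real (w i e)) (Y (\<alpha> j) k))))"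
proof (intro exI conjI)
  let ?K = "\<lambda>a::real. 2::nat"
  let ?X = "\<lambda>(a::real) (k::nat). if k = 1 then a - 1 else 0"
  let ?Y = "\<lambda>(a::real) (k::nat). if k = 1 then 1 else a"
  let ?Z = "\<lambda>(a::real) (k::nat). a * 2 powr (a - 1)"
  show "\<forall>a. a > 1 \<longrightarrow> (\<forall>k\<in>{1..?K a}.
          0 \<le> ?X a k \<and> ?X a k \<le> a - 1 \<and> 1 \<le> ?Y a k \<and> ?Y a k \<le> a \<and>
          ?X a k + ?Y a k = a \<and> 0 \<le> ?Z a k)" by auto
  show "\<forall>E N P w q \<alpha> \<sigma> \<xi> p i e.
        gnd_instance E N P w q \<alpha> \<sigma> \<xi> \<longrightarrow> is_profile N P p \<longrightarrow>
        i \<in> {1..N} \<longrightarrow> e \<in> p i \<longrightarrow>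
        shapley_cost q \<alpha> \<sigma> \<xi> N w p i e
          \<le> \<sigma> e + (\<Sum>j=1..q. \<xi> e j * (\<Sum>k=1..?K (\<alpha> j).
                 ?Z (\<alpha> j) k * rpow (load N p w e - real (w i e)) (?X (\<alpha> j) k)
                             * rpow (real (w i e)) (?Y (\<alpha> j) k)))"
  proof (intro allI impI)
    fix E N P w q \<alpha> \<sigma> \<xi> p i e
    assume g: "gnd_instance E N P w q \<alpha> \<sigma> \<xi>" and pr: "is_profile N P p"
      and i: "i \<in> {1..N}" and e: "e \<in> p i"
    have eE: "e \<in> E" using g pr i e unfolding gnd_instance_def is_profile_def by blast
    define S where "S = users N p e"
    define wt where "wt = (\<lambda>i'. real (w i' e))"
    define x where "x = load N p w e - real (w i e)"
    have fS: "finite S" unfolding S_def users_def by simp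
    have iS: "i \<in> S" unfolding S_def users_def using i e by simp
    have wpos: "\<forall>k\<in>S. wt k \<ge> 1" using g eE unfolding S_def users_def wt_def gnd_instance_def by auto
    hence wnn: "\<forall>k\<in>S. wt k \<ge> 0" by fastforce
    have wi: "wt i > 0" using wpos iS by fastforce
    have xdef: "x = (\<Sum>k\<in>S. wt k) - wt i" unfolding x_def load_def S_def wt_def by simp
    have x0: "0 \<le> x" using pred_weight_bounds[OF _ fS iS wnn] fS
      by (metis ex_in_conv order_trans permutations_of_set_empty_iff xdef)
    have s0: "0 \<le> \<sigma> e" and jj: "\<forall>j\<in>{1..q}. 0 \<le> \<xi> e j \<and> 1 < \<alpha> j"
      using g eE unfolding gnd_instance_def by auto
    have "shapley_cost q \<alpha> \<sigma> \<xi> N w p i e \<le>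
       \<sigma> e + (\<Sum>j=1..q. \<xi> e j * (\<alpha> j * 2 powr (\<alpha> j - 1) * (x powr (\<alpha> j - 1) * wt i + wt i powr \<alpha> j)))"
      unfolding shapley_cost_def S_def[symmetric] wt_def[symmetric]
      apply (rule share_bound[OF fS iS])
      apply (rule cost_step[OF s0 jj])
      using pred_weight_bounds[OF _ fS iS wnn] wi xdef by auto
    also have "\<dots> = \<sigma> e + (\<Sum>j=1..q. \<xi> e j * (\<Sum>k=1..?K (\<alpha> j).
                 ?Z (\<alpha> j) k * rpow x (?X (\<alpha> j) k) * rpow (wt i) (?Y (\<alpha> j) k)))"
    proof -
      have "\<And>j. j \<in> {1..q} \<Longrightarrow> (\<alpha> j * 2 powr (\<alpha> j - 1) * (x powr (\<alpha> j - 1) * wt i + wt i powr \<alpha> j))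
         = (\<Sum>k=1..?K (\<alpha> j). ?Z (\<alpha> j) k * rpow x (?X (\<alpha> j) k) * rpow (wt i) (?Y (\<alpha> j) k))"
      proof -
        fix j assume "j \<in> {1..q}"
        hence a: "\<alpha> j > 1" using jj by auto
        have r1: "rpow x (\<alpha> j - 1) = x powr (\<alpha> j - 1)" using a by (simp add: rpow_def)
        have r2: "rpow x 0 = 1" by (simp add: rpow_def)
        have r3: "rpow (wt i) 1 = wt i" "rpow (wt i) (\<alpha> j) = wt i powr \<alpha> j"
          using wi by (auto simp: rpow_def)
        have "{1..2::nat} = {1,2}" by auto
        thus "?thesis j" using r1 r2 r3 by (simp add: algebra_simps)
      qed
      thus ?thesis by (intro arg_cong2[where f="(+)"] refl sum.cong) auto
    qed
    finally show "shapley_cost q \<alpha> \<sigma> \<xi> N w p i e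
          \<le> \<sigma> e + (\<Sum>j=1..q. \<xi> e j * (\<Sum>k=1..?K (\<alpha> j).
                 ?Z (\<alpha> j) k * rpow (load N p w e - real (w i e)) (?X (\<alpha> j) k)
                             * rpow (real (w i e)) (?Y (\<alpha> j) k)))"
      unfolding x_def wt_def .
  qed
qed

end
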